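(* On the set $\{(u,W):\|W\|_2^2\le B_W^2,\ u_i\le B_u \text{ for all } i\}$, the function $f(u,W)$ is strongly convex with strong convexity constant at least $\min\{\exp(-B_u),\mu\}$.
   Context: Data: $(y_i,x_i)$, $i=1,\dots,N$, $x_i\in\mathbb{R}^D$, $y_i\in\{1,\dots,K\}$, $K\ge 2$; $\mu>0$; $u\in\mathbb{R}^N$, $W=[w_1,\dots,w_K]\in\mathbb{R}^{D\times K}$ with Frobenius norm $\|W\|_2$; $$f(u,W)=\sum_{i=1}^N\Big[u_i+e^{-u_i}+\sum_{k\ne y_i}e^{x_i^\top(w_k-w_{y_i})-u_i}\Big]+\tfrac{\mu}{2}\|W\|_2^2.$$ $B_W^2=\frac{2}{\mu}N\log K$, $B_x=\max_i\|x_i\|_2$, $B_u=\log(1+(K-1)e^{2B_xB_W})$. *)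

theory Defs
  imports "HOL-Analysis.Analysis"
begin

definition strongly_convex_on :: "'a::real_normed_vector set \<Rightarrow> ('a \<Rightarrow> real) \<Rightarrow> real \<Rightarrow> bool" where
  "strongly_convex_on S f m \<longleftrightarrow> convex S \<and>
     (\<forall>x\<in>S. \<forall>y\<in>S. \<forall>t\<in>{0..1}.
        f ((1 - t) *\<^sub>R x + t *\<^sub>R y)
          \<le> (1 - t) * f x + t * f y - m / 2 * t * (1 - t) * (norm (x - y))\<^sup>2)"

text \<open>Samples indexed by finite type 'n (N = CARD('n)), features by 'd (D = CARD('d)),
  classes by 'k (K = CARD('k)). W has entries W \$ d \$ k, its k-th column is w_k;
  norm W is the Frobenius norm.\<close>
definition obj :: "real \<Rightarrow> ('n::finite \<Rightarrow> real^'d::finite) \<Rightarrow> ('n \<Rightarrow> 'k::finite)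
    \<Rightarrow> (real^'n) \<times> (real^'k^'d) \<Rightarrow> real" where
  "obj \<mu> x y z = (let u = fst z; W = snd z in
     (\<Sum>i\<in>UNIV. u $ i + exp (- (u $ i))
        + (\<Sum>k\<in>UNIV - {y i}.
             exp ((\<Sum>d\<in>UNIV. x i $ d * (W $ d $ k - W $ d $ y i)) - u $ i)))
     + \<mu> / 2 * (norm W)\<^sup>2)"

definition BW2 :: "real \<Rightarrow> 'n::finite itself \<Rightarrow> 'k::finite itself \<Rightarrow> real" where
  "BW2 \<mu> _ _ = 2 / \<mu> * real CARD('n) * ln (real CARD('k))"

definition Bx :: "('n::finite \<Rightarrow> real^'d::finite) \<Rightarrow> real" where
  "Bx x = Max (range (\<lambda>i. norm (x i)))"

definition Bu :: "real \<Rightarrow> ('n::finite \<Rightarrow> real^'d::finite) \<Rightarrow> 'k::finite itself \<Rightarrow> real" where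
  "Bu \<mu> x K = ln (1 + (real CARD('k) - 1) * exp (2 * Bx x * sqrt (BW2 \<mu> TYPE('n) K)))"

end

theory Submission imports Defs begin

lemma exp_sc:
  fixes a b B t :: real
  assumes "a \<le> B" "b \<le> B" "0 \<le> t" "t \<le> 1"
  shows "exp (-((1-t)*a+t*b)) \<le> (1-t)*exp(-a)+t*exp(-b) - exp(-B)/2*t*(1-t)*(a-b)^2"
proof -
  let ?m = "exp(-B)"
  have cv: "convex_on {..B} (\<lambda>x. exp(-x) - ?m/2*x^2)"
  proof (rule convex_on_realI[where f'="\<lambda>x. - exp(-x) - ?m*x"])
    show "connected {..B}" by simp
    fix z assume "z \<in> {..B}"
    show "((\<lambda>x. exp(-x) - ?m/2*x^2) has_real_derivative - exp(-z) - ?m*z) (at z)"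
      by (auto intro!: derivative_eq_intros)
  next
    fix p q assume pq: "p \<in> {..B}" "q \<in> {..B}" "p \<le> q"
    have "exp(q-p) \<ge> 1 + (q-p)" by (rule exp_ge_add_one_self)
    hence "exp(-q)*exp(q-p) \<ge> exp(-q)*(1+(q-p))" by (simp add: mult_left_mono)
    hence e1: "exp(-p) \<ge> exp(-q) + exp(-q)*(q-p)" by (simp add: exp_add[symmetric] algebra_simps)
    have "exp(-q) \<ge> ?m" using pq by simp
    hence "exp(-q)*(q-p) \<ge> ?m*(q-p)" using pq by (simp add: mult_right_mono)
    with e1 show "- exp(-p) - ?m*p \<le> - exp(-q) - ?m*q" by (simp add: algebra_simps)
  qed
  have "exp(-((1-t)*a+t*b)) - ?m/2*((1-t)*a+t*b)^2 \<le> (1-t)*(exp(-a) - ?m/2*a^2) + t*(exp(-b) - ?m/2*b^2)"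
    using convex_onD[OF cv, of t a b] assms by simp
  moreover have "(1-t)*a^2 + t*b^2 - ((1-t)*a+t*b)^2 = t*(1-t)*(a-b)^2"
    by (simp add: power2_eq_square algebra_simps)
  hence eq': "(1-t)*a^2 + t*b^2 = ((1-t)*a+t*b)^2 + t*(1-t)*(a-b)^2" by linarith
  have r: "(1-t)*(exp(-a) - ?m/2*a^2) + t*(exp(-b) - ?m/2*b^2) = (1-t)*exp(-a)+t*exp(-b) - ?m/2*((1-t)*a^2+t*b^2)"
    by (simp add: field_simps)
  have r2: "?m/2*((1-t)*a^2+t*b^2) = ?m/2*((1-t)*a+t*b)^2 + ?m/2*t*(1-t)*(a-b)^2"
    by (simp only: eq') (simp add: distrib_left mult.assoc)
  ultimately show ?thesis using r r2 by linarith
qed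

lemma exp_cv:
  fixes p q t :: real assumes "0 \<le> t" "t \<le> 1"
  shows "exp ((1-t)*p+t*q) \<le> (1-t)*exp p+t*exp q"
  using convex_onD[OF exp_convex, of t p q] assms by simp

lemma norm_sc:
  fixes A B :: "'a::real_inner" and t :: real
  shows "(norm ((1-t) *\<^sub>R A + t *\<^sub>R B))^2 = (1-t)*(norm A)^2 + t*(norm B)^2 - t*(1-t)*(norm (A-B))^2"
  unfolding power2_norm_eq_inner
  by (simp add: inner_add_left inner_add_right inner_diff_left inner_diff_right inner_commute algebra_simps)


lemma norm_vec_sq: "(norm (v::real^'n))^2 = (\<Sum>i\<in>UNIV. (v$i)^2)"
  unfolding power2_norm_eq_inner by (simp add: inner_vec_def power2_eq_square)

theorem lemma3:
  fixes \<mu> :: real and x :: "'n::finite \<Rightarrow> real^'d::finite" and y :: "'n \<Rightarrow> 'k::finite"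
  assumes "\<mu> > 0" and "CARD('k) \<ge> 2"
  shows "strongly_convex_on
           {(u, W). (norm W)\<^sup>2 \<le> BW2 \<mu> TYPE('n) TYPE('k) \<and> (\<forall>i. u $ i \<le> Bu \<mu> x TYPE('k))}
           (obj \<mu> x y) (min (exp (- Bu \<mu> x TYPE('k))) \<mu>)"
proof -
  define B where "B = Bu \<mu> x TYPE('k)"
  define C where "C = BW2 \<mu> TYPE('n) TYPE('k)"
  define S :: "((real^'n) \<times> (real^'k^'d)) set" where "S = {(u, W). (norm W)\<^sup>2 \<le> C \<and> (\<forall>i. u $ i \<le> B)}"
  define m where "m = min (exp (- B)) \<mu>"
  define L where "L = (\<lambda>i k (W::real^'k^'d). (\<Sum>d\<in>UNIV. x i $ d * (W $ d $ k - W $ d $ y i)))"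
  define F where "F = (\<lambda>i (u::real^'n) W. u $ i + exp (- (u $ i)) + (\<Sum>k\<in>UNIV - {y i}. exp (L i k W - u $ i)))"
  have objeq: "obj \<mu> x y (u, W) = (\<Sum>i\<in>UNIV. F i u W) + \<mu>/2 * (norm W)^2" for u W
    unfolding obj_def F_def L_def by simp
  have Lc: "L i k ((1-t) *\<^sub>R W1 + t *\<^sub>R W2) = (1-t) * L i k W1 + t * L i k W2" for i k t W1 W2
    unfolding L_def by (simp add: sum_distrib_left sum.distrib[symmetric] algebra_simps)
  have cvx: "convex S"
    unfolding convex_alt
  proof (intro ballI allI impI)
    fix z1 z2 :: "(real^'n) \<times> (real^'k^'d)" and t :: real
    assume z: "z1 \<in> S" "z2 \<in> S" and t: "0 \<le> t \<and> t \<le> 1"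
    obtain u1 W1 where z1: "z1 = (u1, W1)" by fastforce
    obtain u2 W2 where z2: "z2 = (u2, W2)" by fastforce
    have h1: "(norm W1)^2 \<le> C" "\<forall>i. u1 $ i \<le> B" using z(1) z1 S_def by auto
    have h2: "(norm W2)^2 \<le> C" "\<forall>i. u2 $ i \<le> B" using z(2) z2 S_def by auto
    have "(norm ((1-t) *\<^sub>R W1 + t *\<^sub>R W2))^2 \<le> (1-t)*(norm W1)^2 + t*(norm W2)^2"
      using norm_sc[of t W1 W2] t by (simp add: mult_nonneg_nonneg)
    also have "\<dots> \<le> (1-t)*C + t*C"
      using h1 h2 t by (intro add_mono mult_left_mono) auto
    finally have a: "(norm ((1-t) *\<^sub>R W1 + t *\<^sub>R W2))^2 \<le> C" by (simp add: algebra_simps)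
    have b: "((1-t) *\<^sub>R u1 + t *\<^sub>R u2) $ i \<le> B" for i
    proof -
      have "(1-t) * u1$i + t * u2$i \<le> (1-t)*B + t*B"
        using h1 h2 t by (intro add_mono mult_left_mono) auto
      thus ?thesis by (simp add: algebra_simps)
    qed
    show "(1 - t) *\<^sub>R z1 + t *\<^sub>R z2 \<in> S" using a b unfolding S_def z1 z2 by simp
  qed
  have main: "obj \<mu> x y ((1 - t) *\<^sub>R z1 + t *\<^sub>R z2)
          \<le> (1 - t) * obj \<mu> x y z1 + t * obj \<mu> x y z2 - m / 2 * t * (1 - t) * (norm (z1 - z2))\<^sup>2"
    if z: "z1 \<in> S" "z2 \<in> S" and t: "t \<in> {0..1}" for z1 z2 t
  proof -
    obtain u1 W1 where z1: "z1 = (u1, W1)" by fastforce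
    obtain u2 W2 where z2: "z2 = (u2, W2)" by fastforce
    have h1: "\<forall>i. u1 $ i \<le> B" using z(1) z1 S_def by auto
    have h2: "\<forall>i. u2 $ i \<le> B" using z(2) z2 S_def by auto
    have t0: "0 \<le> t" "t \<le> 1" using t by auto
    define uc where "uc = (1-t) *\<^sub>R u1 + t *\<^sub>R u2"
    define Wc where "Wc = (1-t) *\<^sub>R W1 + t *\<^sub>R W2"
    have comb: "(1 - t) *\<^sub>R z1 + t *\<^sub>R z2 = (uc, Wc)" unfolding z1 z2 uc_def Wc_def by simp
    have Fi: "F i uc Wc \<le> (1-t) * F i u1 W1 + t * F i u2 W2 - exp(-B)/2*t*(1-t)*(u1$i - u2$i)^2" for i
    proof -
      have uci: "uc $ i = (1-t) * u1$i + t * u2$i" unfolding uc_def by simp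
      have e1: "exp (- (uc $ i)) \<le> (1-t)*exp(-(u1$i)) + t*exp(-(u2$i)) - exp(-B)/2*t*(1-t)*(u1$i - u2$i)^2"
        unfolding uci using exp_sc[of "u1$i" B "u2$i" t] h1 h2 t0 by simp
      have e2: "exp (L i k Wc - uc $ i) \<le> (1-t) * exp (L i k W1 - u1 $ i) + t * exp (L i k W2 - u2 $ i)" for k
      proof -
        have "L i k Wc - uc $ i = (1-t) * (L i k W1 - u1 $ i) + t * (L i k W2 - u2 $ i)"
          unfolding uci Wc_def Lc by (simp add: algebra_simps)
        thus ?thesis using exp_cv[OF t0] by simp
      qed
      have e3: "(\<Sum>k\<in>UNIV - {y i}. exp (L i k Wc - uc $ i)) \<le>
         (1-t) * (\<Sum>k\<in>UNIV - {y i}. exp (L i k W1 - u1 $ i)) + t * (\<Sum>k\<in>UNIV - {y i}. exp (L i k W2 - u2 $ i))"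
        unfolding sum_distrib_left sum.distrib[symmetric] by (rule sum_mono) (rule e2)
      have f0: "F i uc Wc = ((1-t) * u1$i + t * u2$i) + exp (- (uc $ i)) + (\<Sum>k\<in>UNIV - {y i}. exp (L i k Wc - uc $ i))"
        unfolding F_def uci by simp
      have f1: "(1-t) * F i u1 W1 + t * F i u2 W2 = ((1-t) * u1$i + t * u2$i) + ((1-t)*exp(-(u1$i)) + t*exp(-(u2$i)))
          + ((1-t) * (\<Sum>k\<in>UNIV - {y i}. exp (L i k W1 - u1 $ i)) + t * (\<Sum>k\<in>UNIV - {y i}. exp (L i k W2 - u2 $ i)))"
        unfolding F_def by (simp add: algebra_simps)
      show ?thesis unfolding f0 f1 using e1 e3 by linarith
    qed
    have s1: "(\<Sum>i\<in>UNIV. F i uc Wc) \<le> (\<Sum>i\<in>UNIV. (1-t) * F i u1 W1 + t * F i u2 W2 - exp(-B)/2*t*(1-t)*(u1$i - u2$i)^2)"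
      by (rule sum_mono) (rule Fi)
    also have "\<dots> = (1-t) * (\<Sum>i\<in>UNIV. F i u1 W1) + t * (\<Sum>i\<in>UNIV. F i u2 W2) - exp(-B)/2*t*(1-t)*(norm (u1 - u2))^2"
      by (simp add: norm_vec_sq sum.distrib sum_subtractf sum_distrib_left)
    finally have s2: "(\<Sum>i\<in>UNIV. F i uc Wc) \<le> (1-t) * (\<Sum>i\<in>UNIV. F i u1 W1) + t * (\<Sum>i\<in>UNIV. F i u2 W2) - exp(-B)/2*t*(1-t)*(norm (u1 - u2))^2" .
    have nW: "\<mu>/2 * (norm Wc)^2 = (1-t) * (\<mu>/2 * (norm W1)^2) + t * (\<mu>/2 * (norm W2)^2) - \<mu>/2*t*(1-t)*(norm (W1 - W2))^2"
      unfolding Wc_def norm_sc by (simp add: field_simps)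
    have nz: "(norm (z1 - z2))^2 = (norm (u1 - u2))^2 + (norm (W1 - W2))^2"
      unfolding z1 z2 by (simp add: norm_Pair)
    have P: "0 \<le> t*(1-t)" using t0 by simp
    have m1: "m/2*(t*(1-t))*(norm (u1 - u2))^2 \<le> exp(-B)/2*(t*(1-t))*(norm (u1 - u2))^2"
      unfolding m_def by (intro mult_right_mono P) auto
    have m2: "m/2*(t*(1-t))*(norm (W1 - W2))^2 \<le> \<mu>/2*(t*(1-t))*(norm (W1 - W2))^2"
      unfolding m_def by (intro mult_right_mono P) auto
    have q0: "m / 2 * t * (1 - t) * (norm (z1 - z2))\<^sup>2 = m/2*(t*(1-t))*(norm (u1 - u2))^2 + m/2*(t*(1-t))*(norm (W1 - W2))^2"
      unfolding nz by (simp add: algebra_simps)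
    have q1: "exp(-B)/2*t*(1-t)*(norm (u1 - u2))^2 = exp(-B)/2*(t*(1-t))*(norm (u1 - u2))^2"
      "\<mu>/2*t*(1-t)*(norm (W1 - W2))^2 = \<mu>/2*(t*(1-t))*(norm (W1 - W2))^2" by (simp_all add: algebra_simps)
    have q2: "(1-t) * obj \<mu> x y z1 + t * obj \<mu> x y z2 = ((1-t) * (\<Sum>i\<in>UNIV. F i u1 W1) + t * (\<Sum>i\<in>UNIV. F i u2 W2))
        + ((1-t) * (\<mu>/2 * (norm W1)^2) + t * (\<mu>/2 * (norm W2)^2))"
      unfolding z1 z2 objeq by (simp add: algebra_simps)
    have q3: "obj \<mu> x y ((1 - t) *\<^sub>R z1 + t *\<^sub>R z2) = (\<Sum>i\<in>UNIV. F i uc Wc) + \<mu>/2 * (norm Wc)^2"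
      unfolding comb objeq ..
    show ?thesis unfolding q0 q2 q3 using s2 nW m1 m2 q1 by linarith
  qed
  have "strongly_convex_on S (obj \<mu> x y) m"
    unfolding strongly_convex_on_def using cvx main by blast
  thus ?thesis unfolding S_def m_def B_def C_def .
qed

end
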